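(* Let $X_1,\dots,X_n$ be i.i.d. with c.d.f. $F$ and mean $\mu$, let $p\geq1$ with $\nu_p<+\infty$. Let $k_1,k_2\in\mathbb{N}$ with $k_1+k_2<n$ and $k_{\min}:=\min\{k_1,k_2\}>0$. Then for any $t>0$, \[\Pr\left(\Delta_{n,k_1,k_2}>t\,\nu_p\left(\frac{n}{k_{\min}}\right)^{1/p}\right)\leq\left(\frac{e\,2^p\,\rho_{F,p}\left(\frac{2^p}{t^p}\frac{k_{\min}}{n}\right)^p}{t^p}\right)^{k_{\min}}.\]
   Context: $\nu_p:=(\mathbb{E}|X_1-\mu|^p)^{1/p}$. With order statistics $X_{(1)}\le\dots\le X_{(n)}$, the $(k_1,k_2)$-width is $\Delta_{n,k_1,k_2}:=X_{(n-k_2+1)}-X_{(k_1)}$. For $\xi>0$, $\rho_{F,p}(\xi):=\sup\{(\mathbb{E}[|X_1-\mu|^pZ])^{1/p}/\nu_p: 0\le Z\le1 \text{ a random variable (jointly defined with }X_1), \mathbb{E}Z\le\xi\}$ if $\nu_p>0$, and $0$ if $\nu_p=0$. *)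

theory Defs
  imports "HOL-Probability.Probability"
begin

definition nu_p :: "'a measure \<Rightarrow> ('a \<Rightarrow> real) \<Rightarrow> real \<Rightarrow> real" where
  "nu_p M Y p = (\<integral>x. \<bar>Y x - (\<integral>y. Y y \<partial>M)\<bar> powr p \<partial>M) powr (1 / p)"

text \<open>rho_{F,p}(xi): supremum over random variables Z on the same probability
  space as Y (i.e. jointly defined with Y), with 0 <= Z <= 1 and E Z <= xi.\<close>
definition rho_Fp :: "'a measure \<Rightarrow> ('a \<Rightarrow> real) \<Rightarrow> real \<Rightarrow> real \<Rightarrow> real" where
  "rho_Fp M Y p xi =
     (if nu_p M Y p = 0 then 0
      else Sup {(\<integral>x. \<bar>Y x - (\<integral>y. Y y \<partial>M)\<bar> powr p * Z x \<partial>M) powr (1 / p) / nu_p M Y p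
                | Z. Z \<in> borel_measurable M \<and> (\<forall>x\<in>space M. 0 \<le> Z x \<and> Z x \<le> 1)
                     \<and> (\<integral>x. Z x \<partial>M) \<le> xi})"

definition order_stat :: "real list \<Rightarrow> nat \<Rightarrow> real" where
  "order_stat xs k = sort xs ! (k - 1)"

definition width :: "nat \<Rightarrow> nat \<Rightarrow> nat \<Rightarrow> (nat \<Rightarrow> 'a \<Rightarrow> real) \<Rightarrow> 'a \<Rightarrow> real" where
  "width n k1 k2 X w =
     (let xs = map (\<lambda>i. X i w) [0..<n] in order_stat xs (n - k2 + 1) - order_stat xs k1)"

end

theory Submission imports Defs begin
lemma pow_fact_le_exp:
  fixes x :: real assumes "x \<ge> 0"
  shows "x ^ k / fact k \<le> exp x"
proof -
  have "(\<Sum>n\<in>{k}. x ^ n /\<^sub>R fact n) \<le> (\<Sum>n. x ^ n /\<^sub>R fact n)"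
    by (rule sum_le_suminf) (use assms summable_exp_generic[of x] in auto)
  then show ?thesis by (simp add: exp_def divide_inverse mult.commute)
qed

lemma choose_bound:
  fixes q :: real assumes "q \<ge> 0" "k > 0"
  shows "real (n choose k) * q ^ k \<le> (exp 1 * real n * q / real k) ^ k"
proof -
  have f: "real (n choose k) * fact k \<le> real n ^ k"
    using binomial_fact_pow[of n k] by (metis of_nat_fact of_nat_le_iff of_nat_mult of_nat_power)
  have e: "real k ^ k / fact k \<le> exp (real k)" by (rule pow_fact_le_exp) simp
  have fp: "(fact k :: real) > 0" by simp
  have "real (n choose k) \<le> real n ^ k / fact k" using f fp by (simp add: field_simps)
  also have "\<dots> \<le> real n ^ k * exp (real k) / real k ^ k"
  proof -
    have "1 / fact k \<le> exp (real k) / real k ^ k" using e assms(2) fp by (simp add: field_simps)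
    then show ?thesis using mult_left_mono[of "1 / fact k" "exp (real k) / real k ^ k" "real n ^ k"]
      by (simp add: field_simps)
  qed
  finally have c: "real (n choose k) \<le> real n ^ k * exp (real k) / real k ^ k" .
  have "real (n choose k) * q ^ k \<le> real n ^ k * exp (real k) / real k ^ k * q ^ k"
    by (rule mult_right_mono[OF c]) (simp add: assms)
  also have "\<dots> = (exp 1 * real n * q / real k) ^ k"
    by (simp add: power_mult_distrib power_divide exp_of_nat_mult[symmetric])
  finally show ?thesis .
qed

lemma card_ge_sorted:
  fixes xs :: "real list" assumes "m < length xs"
  shows "card {i. i < length xs \<and> sort xs ! m \<le> xs ! i} \<ge> length xs - m"
    and "card {i. i < length xs \<and> xs ! i \<le> sort xs ! m} \<ge> m + 1"
proof -
  let ?ys = "sort xs"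
  have len: "length ?ys = length xs" by simp
  have srt: "sorted ?ys" by simp
  have cnt: "length (filter P ?ys) = length (filter P xs)" for P
  proof -
    have "mset (filter P ?ys) = mset (filter P xs)" by (simp add: mset_filter)
    then show ?thesis by (metis size_mset)
  qed
  have split: "filter P ?ys = filter P (take j ?ys) @ filter P (drop j ?ys)" for P j
    by (simp flip: filter_append)
  have A: "\<forall>x\<in>set (drop m ?ys). ?ys ! m \<le> x"
    using srt by (auto simp: in_set_conv_nth sorted_nth_mono)
  have "length (filter (\<lambda>x. ?ys ! m \<le> x) ?ys) \<ge> length (drop m ?ys)"
    using split[of "\<lambda>x. ?ys ! m \<le> x" m] A by simp
  then have "length (filter (\<lambda>x. ?ys ! m \<le> x) xs) \<ge> length xs - m"
    using cnt[of "\<lambda>x. ?ys ! m \<le> x"] by simp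
  then show "card {i. i < length xs \<and> sort xs ! m \<le> xs ! i} \<ge> length xs - m"
    by (simp add: length_filter_conv_card)
  have B: "\<forall>x\<in>set (take (Suc m) ?ys). x \<le> ?ys ! m"
    using srt assms by (auto simp: in_set_conv_nth sorted_nth_mono)
  have "length (filter (\<lambda>x. x \<le> ?ys ! m) ?ys) \<ge> length (take (Suc m) ?ys)"
    using split[of "\<lambda>x. x \<le> ?ys ! m" "Suc m"] B by simp
  then have "length (filter (\<lambda>x. x \<le> ?ys ! m) xs) \<ge> m + 1"
    using cnt[of "\<lambda>x. x \<le> ?ys ! m"] assms by simp
  then show "card {i. i < length xs \<and> xs ! i \<le> sort xs ! m} \<ge> m + 1"
    by (simp add: length_filter_conv_card)
qed

lemma rho_ge:
  fixes Y :: "'a \<Rightarrow> real" and Z :: "'a \<Rightarrow> real"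
  assumes "prob_space M"
    and moment: "integrable M (\<lambda>x. \<bar>Y x - (\<integral>y. Y y \<partial>M)\<bar> powr p)"
    and p: "p > 0"
    and nu: "nu_p M Y p > 0"
    and Z: "Z \<in> borel_measurable M" "\<And>x. x \<in> space M \<Longrightarrow> 0 \<le> Z x \<and> Z x \<le> 1"
      "(\<integral>x. Z x \<partial>M) \<le> xi"
  shows "(\<integral>x. \<bar>Y x - (\<integral>y. Y y \<partial>M)\<bar> powr p * Z x \<partial>M)
           \<le> rho_Fp M Y p xi powr p * nu_p M Y p powr p"
proof -
  let ?f = "\<lambda>x. \<bar>Y x - (\<integral>y. Y y \<partial>M)\<bar> powr p"
  let ?I = "\<integral>x. ?f x \<partial>M"
  let ?nu = "nu_p M Y p"
  let ?S = "{(\<integral>x. ?f x * Z x \<partial>M) powr (1 / p) / ?nu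
                | Z. Z \<in> borel_measurable M \<and> (\<forall>x\<in>space M. 0 \<le> Z x \<and> Z x \<le> 1)
                     \<and> (\<integral>x. Z x \<partial>M) \<le> xi}"
  have I0: "?I \<ge> 0" by (simp add: integral_nonneg)
  have nudef: "?nu = ?I powr (1/p)" by (simp add: nu_p_def)
  have nupow: "?nu powr p = ?I" using I0 p by (simp add: nudef powr_powr)
  have bound: "(\<integral>x. ?f x * W x \<partial>M) \<le> ?I" if W: "\<And>x. x \<in> space M \<Longrightarrow> 0 \<le> W x \<and> W x \<le> 1" for W
  proof (cases "integrable M (\<lambda>x. ?f x * W x)")
    case True
    show ?thesis
    proof (rule integral_mono[OF True moment])
      fix x assume "x \<in> space M"
      then show "?f x * W x \<le> ?f x" using W[of x] by (simp add: mult_left_le)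
    qed
  next
    case False
    then show ?thesis using I0 by (simp add: not_integrable_integral_eq)
  qed
  have nonneg: "(\<integral>x. ?f x * W x \<partial>M) \<ge> 0" if W: "\<And>x. x \<in> space M \<Longrightarrow> 0 \<le> W x \<and> W x \<le> 1" for W
    using W by (intro integral_nonneg_AE AE_I2) auto
  have bdd: "bdd_above ?S"
  proof (rule bdd_aboveI[where M=1])
    fix y assume "y \<in> ?S"
    then obtain W where W: "\<forall>x\<in>space M. 0 \<le> W x \<and> W x \<le> 1"
      and y: "y = (\<integral>x. ?f x * W x \<partial>M) powr (1 / p) / ?nu" by blast
    have "(\<integral>x. ?f x * W x \<partial>M) powr (1 / p) \<le> ?I powr (1/p)"
      by (rule powr_mono2) (use p nonneg[of W] bound[of W] W in auto)
    then show "y \<le> 1" using y nu nudef by simp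
  qed
  let ?J = "\<integral>x. ?f x * Z x \<partial>M"
  have J0: "?J \<ge> 0" using nonneg[of Z] Z by blast
  have "?J powr (1 / p) / ?nu \<in> ?S" using Z by blast
  then have le: "?J powr (1 / p) / ?nu \<le> rho_Fp M Y p xi"
    using cSup_upper[OF _ bdd] nu by (simp add: rho_Fp_def)
  have rho0: "rho_Fp M Y p xi \<ge> 0"
    using le nu J0 by (meson divide_nonneg_pos order_trans powr_ge_zero)
  have "?J powr (1 / p) \<le> rho_Fp M Y p xi * ?nu" using le nu by (simp add: divide_le_eq)
  then have "(?J powr (1 / p)) powr p \<le> (rho_Fp M Y p xi * ?nu) powr p"
    using p by (intro powr_mono2) auto
  also have "(?J powr (1 / p)) powr p = ?J" using J0 p by (simp add: powr_powr)
  also have "(rho_Fp M Y p xi * ?nu) powr p = rho_Fp M Y p xi powr p * ?nu powr p"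
    using rho0 nu by (simp add: powr_mult)
  finally show ?thesis .
qed

theorem proposition4p5:
  fixes M :: "'a measure" and X :: "nat \<Rightarrow> 'a \<Rightarrow> real"
    and n k1 k2 :: nat and p t :: real
  assumes "prob_space M"
    and rv: "\<And>i. i < n \<Longrightarrow> X i \<in> borel_measurable M"
    and indep: "prob_space.indep_vars M (\<lambda>_. borel) X {0..<n}"
    and ident: "\<And>i. i < n \<Longrightarrow> distr M borel (X i) = distr M borel (X 0)"
    and mean: "integrable M (X 0)"
    and p: "p \<ge> 1"
    and moment: "integrable M (\<lambda>x. \<bar>X 0 x - (\<integral>y. X 0 y \<partial>M)\<bar> powr p)"
    and k: "k1 + k2 < n" "min k1 k2 > 0"
    and t: "t > 0"
  shows "measure M {w \<in> space M.
            width n k1 k2 X w > t * nu_p M (X 0) p * (real n / real (min k1 k2)) powr (1 / p)}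
         \<le> (exp 1 * 2 powr p * (rho_Fp M (X 0) p ((2 powr p / t powr p) * (real (min k1 k2) / real n))) powr p
              / t powr p) ^ (min k1 k2)"
proof -
  interpret P: prob_space M by fact
  let ?mu = "\<integral>y. X 0 y \<partial>M"
  define k where "k = min k1 k2"
  let ?nu = "nu_p M (X 0) p"
  let ?f = "\<lambda>x. \<bar>X 0 x - ?mu\<bar> powr p"
  let ?I = "\<integral>x. ?f x \<partial>M"
  define s where "s = t * ?nu * (real n / real k) powr (1/p)"
  define B where "B = {x::real. s/2 < \<bar>x - ?mu\<bar>}"
  define A where "A i = X i -` B \<inter> space M" for i
  define q where "q = P.prob (A 0)"
  define L where "L = {w \<in> space M. width n k1 k2 X w > s}"
  have k0: "k > 0" "k \<le> k1" "k \<le> k2" using k by (auto simp: k_def)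
  have n0: "n > 0" "k \<le> n" using k k0 by auto
  have nu0: "?nu \<ge> 0" by (simp add: nu_p_def)
  have s0: "s \<ge> 0" using t nu0 by (simp add: s_def)
  have q0: "q \<ge> 0" by (simp add: q_def)
  have Bsets: "B \<in> sets borel" unfolding B_def
    by (intro borel_open open_Collect_less) (auto intro!: continuous_intros)
  have Asets: "A i \<in> P.events" if "i < n" for i
    using rv[OF that] Bsets unfolding A_def by (simp add: measurable_sets)
  have probA: "P.prob (A i) = q" if "i < n" for i
  proof -
    have "P.prob (A i) = measure (distr M borel (X i)) B"
      using rv[OF that] Bsets by (simp add: measure_distr A_def)
    also have "\<dots> = measure (distr M borel (X 0)) B" using ident[OF that] by simp
    also have "\<dots> = q" using rv[of 0] n0 Bsets by (simp add: measure_distr A_def q_def)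
    finally show ?thesis .
  qed
  have indepS: "P.prob (\<Inter>i\<in>S. A i) = q ^ card S" if S: "S \<subseteq> {0..<n}" "S \<noteq> {}" for S
  proof -
    have ind: "P.indep_sets (\<lambda>i. {X i -` A \<inter> space M | A. A \<in> sets borel}) {0..<n}"
      using indep unfolding P.indep_vars_def2 by blast
    have fin: "finite S" using S finite_subset by blast
    have "P.prob (\<Inter>i\<in>S. A i) = (\<Prod>i\<in>S. P.prob (A i))"
      by (rule P.indep_setsD[OF ind S(1) S(2) fin]) (use Bsets in \<open>auto simp: A_def\<close>)
    also have "\<dots> = (\<Prod>i\<in>S. q)" using S probA by (intro prod.cong) auto
    finally show ?thesis by simp
  qed
  define U where "U = (\<Union>S\<in>{S. S \<subseteq> {0..<n} \<and> card S = k}. \<Inter>i\<in>S. A i)"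
  have sub: "L \<subseteq> U"
  proof
    fix w assume wL: "w \<in> L"
    then have w: "w \<in> space M" and wid: "width n k1 k2 X w > s" by (auto simp: L_def)
    define xs where "xs = map (\<lambda>i. X i w) [0..<n]"
    have lenxs: "length xs = n" by (simp add: xs_def)
    have nth: "i < n \<Longrightarrow> xs ! i = X i w" for i by (simp add: xs_def)
    define a where "a = sort xs ! (n - k2)"
    define b where "b = sort xs ! (k1 - 1)"
    have wab: "width n k1 k2 X w = a - b"
      using k by (simp add: width_def order_stat_def Let_def a_def b_def xs_def)
    have "card {i. i < length xs \<and> a \<le> xs ! i} \<ge> length xs - (n - k2)"
      unfolding a_def by (rule card_ge_sorted(1)) (use lenxs k0 n0 in auto)
    moreover have "{i. i < length xs \<and> a \<le> xs ! i} = {i. i < n \<and> a \<le> X i w}"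
      using lenxs nth by auto
    ultimately have c1: "card {i. i < n \<and> a \<le> X i w} \<ge> k2" using lenxs k by simp
    have "card {i. i < length xs \<and> xs ! i \<le> b} \<ge> (k1 - 1) + 1"
      unfolding b_def by (rule card_ge_sorted(2)) (use lenxs k0 k in auto)
    moreover have "{i. i < length xs \<and> xs ! i \<le> b} = {i. i < n \<and> X i w \<le> b}"
      using lenxs nth by auto
    ultimately have c2: "card {i. i < n \<and> X i w \<le> b} \<ge> k1" using k0 by simp
    define G where "G = {i. i < n \<and> s/2 < \<bar>X i w - ?mu\<bar>}"
    have finG: "finite G" by (simp add: G_def)
    have "card G \<ge> k"
    proof (cases "?mu \<le> (a + b) / 2")
      case True
      have "{i. i < n \<and> a \<le> X i w} \<subseteq> G" using True wid wab by (auto simp: G_def abs_real_def)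
      then have "card {i. i < n \<and> a \<le> X i w} \<le> card G" by (rule card_mono[OF finG])
      then show ?thesis using c1 k0 by linarith
    next
      case False
      have "{i. i < n \<and> X i w \<le> b} \<subseteq> G" using False wid wab by (auto simp: G_def abs_real_def)
      then have "card {i. i < n \<and> X i w \<le> b} \<le> card G" by (rule card_mono[OF finG])
      then show ?thesis using c2 k0 by linarith
    qed
    then obtain S where S: "S \<subseteq> G" "card S = k" by (meson obtain_subset_with_card_n)
    have "S \<subseteq> {0..<n}" using S by (auto simp: G_def)
    moreover have "w \<in> (\<Inter>i\<in>S. A i)" using S w by (auto simp: G_def A_def B_def)
    ultimately show "w \<in> U" using S unfolding U_def by blast
  qed
  have mU: "measure M U \<le> real (n choose k) * q ^ k"
  proof -
    let ?F = "{S. S \<subseteq> {0..<n} \<and> card S = k}"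
    have finF: "finite ?F" by (rule finite_subset[of _ "Pow {0..<n}"]) auto
    have ne: "S \<in> ?F \<Longrightarrow> S \<noteq> {}" for S using k0 by auto
    have "measure M U \<le> (\<Sum>S\<in>?F. measure M (\<Inter>i\<in>S. A i))"
      unfolding U_def
    proof (rule measure_UNION_le[OF finF])
      fix S assume "S \<in> ?F"
      then show "(\<Inter>i\<in>S. A i) \<in> sets M" using ne[of S] Asets
        by (intro sets.finite_INT) (auto intro: finite_subset)
    qed
    also have "\<dots> = (\<Sum>S\<in>?F. q ^ k)" using indepS ne by (intro sum.cong) auto
    also have "\<dots> = real (card ?F) * q ^ k" by simp
    also have "card ?F = n choose k" using n_subsets[of "{0..<n}" k] by simp
    finally show ?thesis .
  qed
  have mL: "measure M L \<le> measure M U"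
  proof (cases "L \<in> sets M")
    case True
    have "U \<in> sets M" unfolding U_def
      using k0 Asets
      by (intro sets.finite_UN sets.finite_INT) (auto intro: finite_subset[of _ "Pow {0..<n}"] finite_subset)
    then show ?thesis using True sub by (intro P.finite_measure_mono)
  next
    case False
    then show ?thesis by (simp add: measure_notin_sets)
  qed
  have RHS0: "0 \<le> exp 1 * 2 powr p * (rho_Fp M (X 0) p ((2 powr p / t powr p) * (real k / real n))) powr p / t powr p"
    by simp
  have main: "measure M L \<le> (exp 1 * 2 powr p * (rho_Fp M (X 0) p ((2 powr p / t powr p) * (real k / real n))) powr p
              / t powr p) ^ k"
  proof (cases "?nu = 0")
    case True
    have I0: "?I = 0" using True by (simp add: nu_p_def)
    have "AE x in M. ?f x = 0"
      using I0 integral_nonneg_eq_0_iff_AE[OF moment] by simp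
    then have "AE x in M. \<not> (x \<in> A 0)"
      by eventually_elim (use s0 in \<open>auto simp: A_def B_def\<close>)
    then have "\<P>(x in M. x \<in> A 0) = 0" by (rule P.prob_eq_0_AE)
    moreover have "{x \<in> space M. x \<in> A 0} = A 0" by (auto simp: A_def)
    ultimately have "q = 0" by (simp add: q_def)
    then have "measure M L \<le> 0" using mL mU k0 by (simp add: zero_power)
    also have "0 \<le> (exp 1 * 2 powr p * (rho_Fp M (X 0) p ((2 powr p / t powr p) * (real k / real n))) powr p
              / t powr p) ^ k" using RHS0 by simp
    finally show ?thesis .
  next
    case False
    let ?T = "t powr p" and ?C = "2 powr (p::real)" and ?r = "real n / real k"
    let ?R = "(rho_Fp M (X 0) p ((2 powr p / t powr p) * (real k / real n))) powr p"
    have nupos: "?nu > 0" using False nu0 by simp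
    have I_def': "?nu powr p = ?I" using p by (simp add: nu_p_def powr_powr)
    have Ipos: "?I > 0" using nupos I_def' by (metis powr_gt_zero less_le)
    have rpos: "?r > 0" using n0 k0 by simp
    have Tpos: "?T > 0" using t by simp
    have spow: "(s/2) powr p = ?T * ?I * ?r / ?C"
    proof -
      have "(s/2) powr p = (t powr p * ?nu powr p * ((?r powr (1/p)) powr p)) / ?C"
        using t nu0 rpos by (simp add: s_def powr_mult powr_divide)
      also have "(?r powr (1/p)) powr p = ?r" using p rpos by (simp add: powr_powr)
      finally show ?thesis using I_def' by simp
    qed
    let ?J = "\<integral>x. ?f x * indicator (A 0) x \<partial>M"
    have A0: "A 0 \<in> sets M" using Asets n0 by simp
    have intJ: "integrable M (\<lambda>x. ?f x * indicator (A 0) x)"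
      by (rule integrable_real_mult_indicator[OF A0 moment])
    have a: "(s/2) powr p * q \<le> ?J"
    proof -
      have "(\<integral>x. (s/2) powr p * indicator (A 0) x \<partial>M) \<le> ?J"
      proof (rule integral_mono[OF _ intJ])
        show "integrable M (\<lambda>x. (s/2) powr p * indicator (A 0) x)"
          using integrable_real_mult_indicator[OF A0 P.integrable_const[of "(s/2) powr p"]] by simp
        fix x assume "x \<in> space M"
        show "(s/2) powr p * indicator (A 0) x \<le> ?f x * indicator (A 0) x"
        proof (cases "x \<in> A 0")
          case True
          then have "s/2 \<le> \<bar>X 0 x - ?mu\<bar>" by (simp add: A_def B_def)
          then have "(s/2) powr p \<le> ?f x" using s0 p by (intro powr_mono2) auto
          then show ?thesis using True by simp
        qed simp
      qed
      also have "(\<integral>x. (s/2) powr p * indicator (A 0) x \<partial>M) = (s/2) powr p * q"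
        using A0 by (simp add: q_def)
      finally show ?thesis .
    qed
    have b: "?J \<le> ?I"
    proof (rule integral_mono[OF intJ moment])
      fix x assume "x \<in> space M"
      show "?f x * indicator (A 0) x \<le> ?f x" by (simp add: indicator_def)
    qed
    have "?T * ?I * ?r / ?C * q \<le> ?I" using a b spow by simp
    moreover have "?T * ?I * ?r / ?C * q = (?T * ?r / ?C * q) * ?I" by (simp add: ac_simps)
    ultimately have "(?T * ?r / ?C * q) * ?I \<le> 1 * ?I" by linarith
    then have "?T * ?r / ?C * q \<le> 1" using Ipos by (rule mult_right_le_imp_le)
    then have qxi: "q \<le> (2 powr p / t powr p) * (real k / real n)"
      using Tpos rpos n0 k0 by (simp add: field_simps)
    have c: "?J \<le> ?R * ?nu powr p"
    proof (rule rho_ge[OF \<open>prob_space M\<close> moment _ nupos])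
      show "p > 0" using p by simp
      show "indicator (A 0) \<in> borel_measurable M" using A0 by simp
      show "\<And>x. x \<in> space M \<Longrightarrow> 0 \<le> (indicator (A 0) x::real) \<and> (indicator (A 0) x::real) \<le> 1"
        by (auto simp: indicator_def)
      show "(\<integral>x. indicator (A 0) x \<partial>M) \<le> (2 powr p / t powr p) * (real k / real n)"
        using A0 qxi by (simp add: q_def)
    qed
    have "?T * ?I * ?r / ?C * q \<le> ?R * ?I" using a c spow I_def' by simp
    moreover have "?T * ?I * ?r / ?C * q = (?T * ?r / ?C * q) * ?I" by (simp add: ac_simps)
    ultimately have "(?T * ?r / ?C * q) * ?I \<le> ?R * ?I" by linarith
    then have "?T * ?r / ?C * q \<le> ?R" using Ipos by (rule mult_right_le_imp_le)
    then have qb: "exp 1 * real n * q / real k \<le> exp 1 * ?C * ?R / ?T"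
      using Tpos rpos n0 k0 by (simp add: field_simps)
    have "measure M L \<le> real (n choose k) * q ^ k" using mL mU by simp
    also have "\<dots> \<le> (exp 1 * real n * q / real k) ^ k" by (rule choose_bound[OF q0 k0(1)])
    also have "\<dots> \<le> (exp 1 * ?C * ?R / ?T) ^ k"
      by (rule power_mono[OF qb]) (use q0 in simp)
    finally show ?thesis .
  qed
  then show ?thesis unfolding L_def s_def k_def by simp
qed
end
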